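(* Let $d>e\ge1$. The set $S_{d,e}\subseteq\mathbb{C}^{d+e-2}$ is compact.
   Context: For a tuple $(a_{d-1},\dots,a_1,b_{e-1},\dots,b_1)\in\mathbb{C}^{d+e-2}$ consider the correspondence $C=\{(x,y)\in\mathbb{C}^2: y^e+b_{e-1}y^{e-1}+\cdots+b_1y=x^d+a_{d-1}x^{d-1}+\cdots+a_1x\}$. Writing it as $g(y)=f(x)$, a critical point is $a\in\mathbb{C}$ with $f'(a)=0$ or $g'(b)=0$ for some $b$ with $g(b)=f(a)$. A path is a sequence $(x_n)_{n\ge0}$ with $(x_n,x_{n+1})\in C$ for all $n$, starting at $x_0$; it is bounded if $\sup_n|x_n|<\infty$. $S_{d,e}$ is the set of tuples for which every critical point of $C$ is the starting point of at least one bounded path. *)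

theory Defs
  imports "HOL-Analysis.Analysis"
begin

text \<open>A parameter tuple (a_{d-1},...,a_1,b_{e-1},...,b_1) in C^{d+e-2} is encoded as a
pair of coefficient functions (a, b) :: (nat => complex) x (nat => complex), where
a i is meaningful for 1 <= i <= d-1, b j for 1 <= j <= e-1, and all other entries are 0.
This zero-padding embeds C^{d+e-2} homeomorphically onto a closed subspace of the
product-topology space, so compactness is preserved both ways.\<close>

definition coeff_space :: "nat \<Rightarrow> nat \<Rightarrow> ((nat \<Rightarrow> complex) \<times> (nat \<Rightarrow> complex)) set" where
  "coeff_space d e = {(a, b). (\<forall>i. (i < 1 \<or> i > d - 1) \<longrightarrow> a i = 0) \<and>
                              (\<forall>j. (j < 1 \<or> j > e - 1) \<longrightarrow> b j = 0)}"

definition fpoly :: "nat \<Rightarrow> (nat \<Rightarrow> complex) \<Rightarrow> complex \<Rightarrow> complex" where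
  "fpoly d a x = x ^ d + (\<Sum>i=1..d-1. a i * x ^ i)"

definition critical_point :: "nat \<Rightarrow> nat \<Rightarrow> (nat \<Rightarrow> complex) \<Rightarrow> (nat \<Rightarrow> complex) \<Rightarrow> complex \<Rightarrow> bool" where
  "critical_point d e a b z \<longleftrightarrow>
     deriv (fpoly d a) z = 0 \<or>
     (\<exists>w. deriv (fpoly e b) w = 0 \<and> fpoly e b w = fpoly d a z)"

definition is_path :: "nat \<Rightarrow> nat \<Rightarrow> (nat \<Rightarrow> complex) \<Rightarrow> (nat \<Rightarrow> complex) \<Rightarrow> complex \<Rightarrow> (nat \<Rightarrow> complex) \<Rightarrow> bool" where
  "is_path d e a b z x \<longleftrightarrow> x 0 = z \<and> (\<forall>n. fpoly e b (x (Suc n)) = fpoly d a (x n))"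

definition S_set :: "nat \<Rightarrow> nat \<Rightarrow> ((nat \<Rightarrow> complex) \<times> (nat \<Rightarrow> complex)) set" where
  "S_set d e = {(a, b) \<in> coeff_space d e.
     \<forall>z. critical_point d e a b z \<longrightarrow>
        (\<exists>x. is_path d e a b z x \<and> bounded (range x))}"

end

theory Submission
  imports Defs "HOL-Computational_Algebra.Fundamental_Theorem_Algebra" "HOL-Analysis.Function_Metric"
begin


definition Pd :: "nat \<Rightarrow> (nat \<Rightarrow> complex) \<Rightarrow> complex poly" where
  "Pd d a = monom 1 d + (\<Sum>i\<in>{1..d-1}. monom (a i) i)"

lemma coeff_Pd:
  assumes "d \<ge> 1"
  shows "coeff (Pd d a) n = (if n = d then 1 else if n \<in> {1..d-1} then a n else 0)"
proof -
  have "coeff (\<Sum>i\<in>{1..d-1}. monom (a i) i) n = (\<Sum>i\<in>{1..d-1}. if i = n then a i else 0)"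
    by (simp add: coeff_sum coeff_monom)
  also have "\<dots> = (if n \<in> {1..d-1} then a n else 0)"
    by (simp add: sum.delta')
  finally show ?thesis using assms by (auto simp: Pd_def coeff_monom)
qed

lemma poly_Pd: "poly (Pd d a) x = fpoly d a x"
  by (simp add: Pd_def fpoly_def poly_sum poly_monom)

lemma degree_Pd:
  assumes "d \<ge> 1" shows "degree (Pd d a) = d"
proof (rule antisym)
  show "degree (Pd d a) \<le> d"
    by (rule degree_le) (use assms in \<open>auto simp: coeff_Pd\<close>)
  show "d \<le> degree (Pd d a)"
    by (rule le_degree) (use assms in \<open>simp add: coeff_Pd\<close>)
qed

lemma fpoly_eq: "fpoly d a = poly (Pd d a)"
  by (rule ext) (simp add: poly_Pd)

lemma deriv_fpoly: "deriv (fpoly d a) z = poly (pderiv (Pd d a)) z"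
  unfolding fpoly_eq by (rule DERIV_imp_deriv) (rule poly_DERIV)

lemma root_near:
  fixes p :: "complex poly"
  assumes "degree p = n" "n \<ge> 1"
  shows "\<exists>r. poly p r = 0 \<and> cmod (lead_coeff p) * cmod (z - r) ^ n \<le> cmod (poly p z)"
proof -
  obtain root where rt: "smult (lead_coeff p) (\<Prod>i<degree p. [:-root i, 1:]) = p"
    by (rule complex_poly_decompose')
  have fin: "finite {..<n}" by simp
  have "0 \<in> {..<n}" using assms(2) by simp
  then have ne: "{..<n} \<noteq> {}" by blast
  define m where "m = Min ((\<lambda>i. cmod (z - root i)) ` {..<n})"
  have "m \<in> (\<lambda>i. cmod (z - root i)) ` {..<n}"
    unfolding m_def using fin ne by (intro Min_in) auto
  then obtain i0 where i0a: "i0 \<in> {..<n}" and m0: "m = cmod (z - root i0)" by blast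
  have i0: "i0 \<in> {..<n}" "\<And>i. i \<in> {..<n} \<Longrightarrow> cmod (z - root i0) \<le> cmod (z - root i)"
    using i0a by (auto simp: m0[symmetric] m_def intro!: Min_le)
  have pz: "poly p x = lead_coeff p * (\<Prod>i<n. x - root i)" for x
    by (subst rt[symmetric]) (simp add: assms poly_prod)
  have "poly p (root i0) = 0"
    unfolding pz using i0(1) by (auto simp: prod_zero_iff)
  moreover have "cmod (z - root i0) ^ n \<le> (\<Prod>i<n. cmod (z - root i))"
  proof -
    have "(\<Prod>i<n. cmod (z - root i0)) \<le> (\<Prod>i<n. cmod (z - root i))"
      by (rule prod_mono) (use i0 in auto)
    then show ?thesis by simp
  qed
  then have "cmod (lead_coeff p) * cmod (z - root i0) ^ n \<le> cmod (poly p z)"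
    unfolding pz by (simp add: norm_mult prod_norm mult_left_mono)
  ultimately show ?thesis by blast
qed



lemma poly_sum_upto:
  fixes q :: "complex poly"
  assumes "degree q \<le> n"
  shows "poly q x = (\<Sum>i\<le>n. coeff q i * x ^ i)"
proof -
  have "poly q x = (\<Sum>i\<le>degree q. coeff q i * x ^ i)" by (rule poly_altdef)
  also have "\<dots> = (\<Sum>i\<le>n. coeff q i * x ^ i)"
    by (rule sum.mono_neutral_left) (use assms in \<open>auto simp: coeff_eq_0\<close>)
  finally show ?thesis .
qed

lemma RC:
  fixes p :: "nat \<Rightarrow> complex poly"
  assumes deg: "\<And>k. degree (p k) = n" and n1: "n \<ge> 1"
    and co: "\<And>i. (\<lambda>k. coeff (p k) i) \<longlonglongrightarrow> coeff q i"
    and qn: "coeff q n \<noteq> 0" and qz: "poly q z = 0"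
  shows "\<exists>r. (\<forall>k. poly (p k) (r k) = 0) \<and> r \<longlonglongrightarrow> z"
proof -
  have dq: "degree q \<le> n"
  proof (rule degree_le, intro allI impI)
    fix i assume "n < i"
    then have "(\<lambda>k. coeff (p k) i) = (\<lambda>k. 0)" using deg by (intro ext coeff_eq_0) simp
    with co[of i] show "coeff q i = 0" by (metis LIMSEQ_const_iff)
  qed
  have pz: "(\<lambda>k. poly (p k) z) \<longlonglongrightarrow> 0"
  proof -
    have "(\<lambda>k. \<Sum>i\<le>n. coeff (p k) i * z ^ i) \<longlonglongrightarrow> (\<Sum>i\<le>n. coeff q i * z ^ i)"
      by (intro tendsto_intros co)
    moreover have "(\<lambda>k. poly (p k) z) = (\<lambda>k. \<Sum>i\<le>n. coeff (p k) i * z ^ i)"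
      using deg by (intro ext poly_sum_upto) simp
    moreover have "(\<Sum>i\<le>n. coeff q i * z ^ i) = 0" using poly_sum_upto[OF dq] qz by simp
    ultimately show ?thesis by simp
  qed
  have lcne: "lead_coeff (p k) \<noteq> 0" for k
    using deg[of k] n1 by (auto simp: leading_coeff_0_iff)
  have "\<forall>k. \<exists>r. poly (p k) r = 0 \<and> cmod (lead_coeff (p k)) * cmod (z - r) ^ n \<le> cmod (poly (p k) z)"
    using root_near[OF deg n1] by blast
  then obtain r where r: "\<And>k. poly (p k) (r k) = 0"
     "\<And>k. cmod (lead_coeff (p k)) * cmod (z - r k) ^ n \<le> cmod (poly (p k) z)"
    by metis
  define Y where "Y k = root n (cmod (poly (p k) z) / cmod (lead_coeff (p k)))" for k
  have lc: "(\<lambda>k. lead_coeff (p k)) \<longlonglongrightarrow> coeff q n"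
    using co[of n] deg by simp
  have Y0: "Y \<longlonglongrightarrow> 0"
  proof -
    have "(\<lambda>k. cmod (poly (p k) z) / cmod (lead_coeff (p k))) \<longlonglongrightarrow> 0 / cmod (coeff q n)"
      using tendsto_divide[OF tendsto_norm_zero[OF pz] tendsto_norm[OF lc]] qn by simp
    then have "Y \<longlonglongrightarrow> root n (0 / cmod (coeff q n))"
      unfolding Y_def by (rule tendsto_real_root)
    then show ?thesis by simp
  qed
  have le: "norm (r k - z) \<le> Y k" for k
  proof -
    have "cmod (z - r k) ^ n \<le> cmod (poly (p k) z) / cmod (lead_coeff (p k))"
      using r(2)[of k] lcne[of k] by (simp add: field_simps)
    then have "root n (cmod (z - r k) ^ n) \<le> Y k"
      unfolding Y_def using n1 by (simp add: real_root_le_iff)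
    moreover have "root n (cmod (z - r k) ^ n) = cmod (z - r k)"
      using n1 by (simp add: real_root_power_cancel)
    ultimately show ?thesis by (simp add: norm_minus_commute)
  qed
  have "(\<lambda>k. r k - z) \<longlonglongrightarrow> 0"
    by (rule Lim_null_comparison[OF _ Y0]) (simp add: le)
  then have "r \<longlonglongrightarrow> z" by (simp add: LIM_zero_iff)
  with r(1) show ?thesis by blast
qed



lemma degree_decomp:
  fixes p :: "complex poly"
  assumes "p \<noteq> 0"
  shows "degree p = (\<Sum>z\<in>{z. poly p z = 0}. order z p)"
proof -
  have "degree p = degree (smult (lead_coeff p) (\<Prod>z|poly p z = 0. [:-z, 1:] ^ order z p))"
    by (subst complex_poly_decompose) simp
  also have "\<dots> = degree (\<Prod>z|poly p z = 0. [:-z, 1:] ^ order z p)"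
    using assms by simp
  also have "\<dots> = (\<Sum>z\<in>{z. poly p z = 0}. degree ([:-z, 1:] ^ order z p))"
    by (rule degree_prod_sum_eq) simp
  also have "\<dots> = (\<Sum>z\<in>{z. poly p z = 0}. order z p)"
    by (simp add: degree_linear_power)
  finally show ?thesis .
qed

lemma only_crit_roots:
  fixes p :: "complex poly"
  assumes dp: "degree p = n" and n1: "n \<ge> 1" and lc: "lead_coeff p = 1" and p0: "poly p 0 = 0"
    and crit: "\<And>z. poly (pderiv p) z = 0 \<Longrightarrow> poly p z = 0"
  shows "\<And>i. i < n \<Longrightarrow> coeff p i = 0"
proof -
  have pne: "p \<noteq> 0" using dp n1 by auto
  have dne: "pderiv p \<noteq> 0" using dp n1 by (simp add: pderiv_eq_0_iff)
  define R where "R = {z. poly p z = 0}"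
  define R' where "R' = {z. poly (pderiv p) z = 0}"
  have finR: "finite R" unfolding R_def using pne by (rule poly_roots_finite)
  have sub: "R' \<subseteq> R" unfolding R_def R'_def using crit by auto
  have "n - 1 = degree (pderiv p)" using dp by (simp add: degree_pderiv)
  also have "\<dots> = (\<Sum>z\<in>R'. order z (pderiv p))" unfolding R'_def by (rule degree_decomp[OF dne])
  also have "\<dots> = (\<Sum>z\<in>R. order z (pderiv p))"
  proof (rule sum.mono_neutral_left[OF finR sub], intro ballI)
    fix z assume "z \<in> R - R'"
    then show "order z (pderiv p) = 0" unfolding R'_def by (simp add: order_root)
  qed
  finally have e1: "n - 1 = (\<Sum>z\<in>R. order z (pderiv p))" .
  have "n = (\<Sum>z\<in>R. order z p)" unfolding R_def dp[symmetric] by (rule degree_decomp[OF pne])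
  also have "\<dots> = (\<Sum>z\<in>R. Suc (order z (pderiv p)))"
    by (rule sum.cong) (auto simp: R_def intro: order_pderiv[OF pne])
  also have "\<dots> = card R + (n - 1)" using e1 by (simp add: sum.distrib sum_Suc)
  finally have "card R = 1" using n1 by simp
  moreover have "0 \<in> R" using p0 by (simp add: R_def)
  ultimately have R0: "R = {0}" by (metis card_1_singletonE singletonD)
  have "p = smult (lead_coeff p) (\<Prod>z|poly p z = 0. [:-z, 1:] ^ order z p)"
    by (simp add: complex_poly_decompose)
  also have "\<dots> = [:0, 1:] ^ order 0 p" using R0 lc by (simp add: R_def[symmetric])
  finally have peq: "p = [:0, 1:] ^ order 0 p" .
  have "order 0 p = n" using dp by (subst (asm) peq) (simp add: degree_linear_power)
  then have "p = monom 1 n" using peq by (simp add: monom_altdef)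
  then show "\<And>i. i < n \<Longrightarrow> coeff p i = 0" by (simp add: coeff_monom)
qed



lemma term_le:
  fixes M t :: real
  assumes "0 \<le> M" "M \<le> t" "1 \<le> i" "i \<le> d - 1"
  shows "M ^ (d - i) * t ^ i \<le> M * t ^ (d - 1)"
proof -
  have eq1: "d - i = Suc (d - 1 - i)" using assms by simp
  have eq2: "d - 1 = (d - 1 - i) + i" using assms by simp
  have "M ^ (d - i) * t ^ i = M * (M ^ (d - 1 - i) * t ^ i)" by (simp add: eq1)
  also have "\<dots> \<le> M * (t ^ (d - 1 - i) * t ^ i)"
    using assms by (intro mult_left_mono mult_right_mono power_mono) auto
  also have "\<dots> = M * t ^ (d - 1)" by (metis eq2 power_add)
  finally show ?thesis .
qed

lemma fpoly_lower:
  assumes "0 \<le> M" "M \<le> cmod x" "\<forall>i\<in>{1..d-1}. cmod (a i) \<le> M ^ (d - i)"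
  shows "cmod (fpoly d a x) \<ge> cmod x ^ d - real (d - 1) * M * cmod x ^ (d - 1)"
proof -
  let ?t = "cmod x"
  have "cmod (\<Sum>i=1..d-1. a i * x ^ i) \<le> (\<Sum>i=1..d-1. cmod (a i * x ^ i))"
    by (rule norm_sum)
  also have "\<dots> \<le> (\<Sum>i=1..d-1. M * ?t ^ (d - 1))"
  proof (rule sum_mono)
    fix i assume i: "i \<in> {1..d-1}"
    have "cmod (a i * x ^ i) = cmod (a i) * ?t ^ i" by (simp add: norm_mult norm_power)
    also have "\<dots> \<le> M ^ (d - i) * ?t ^ i" using assms i by (intro mult_right_mono) auto
    also have "\<dots> \<le> M * ?t ^ (d - 1)" using assms i by (intro term_le) auto
    finally show "cmod (a i * x ^ i) \<le> M * ?t ^ (d - 1)" .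
  qed
  also have "\<dots> = (d - 1) * M * ?t ^ (d - 1)" by simp
  finally have S: "cmod (\<Sum>i=1..d-1. a i * x ^ i) \<le> (d - 1) * M * ?t ^ (d - 1)" .
  have "cmod (fpoly d a x) \<ge> cmod (x ^ d) - cmod (\<Sum>i=1..d-1. a i * x ^ i)"
    unfolding fpoly_def by (metis norm_diff_ineq norm_minus_cancel diff_minus_eq_add)
  then show ?thesis using S by (simp add: norm_power)
qed

lemma fpoly_upper:
  assumes "0 \<le> M" "M \<le> s" "cmod y \<le> s" "\<forall>j\<in>{1..e-1}. cmod (b j) \<le> M ^ (e - j)" "e \<ge> 1"
  shows "cmod (fpoly e b y) \<le> e * s ^ e"
proof -
  have s0: "0 \<le> s" using assms by linarith
  have "cmod (\<Sum>j=1..e-1. b j * y ^ j) \<le> (\<Sum>j=1..e-1. cmod (b j * y ^ j))"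
    by (rule norm_sum)
  also have "\<dots> \<le> (\<Sum>j=1..e-1. s ^ e)"
  proof (rule sum_mono)
    fix j assume j: "j \<in> {1..e-1}"
    have "cmod (b j * y ^ j) = cmod (b j) * cmod y ^ j" by (simp add: norm_mult norm_power)
    also have "\<dots> \<le> s ^ (e - j) * s ^ j"
      using assms j s0 by (intro mult_mono power_mono order_trans[OF _ power_mono[of M s]]) auto
    also have "\<dots> = s ^ e" using j by (metis le_add_diff_inverse2 atLeastAtMost_iff power_add le_diff_conv2 assms(5) diff_le_self order_trans)
    finally show "cmod (b j * y ^ j) \<le> s ^ e" .
  qed
  also have "\<dots> = (e - 1) * s ^ e" by simp
  finally have S: "cmod (\<Sum>j=1..e-1. b j * y ^ j) \<le> (e - 1) * s ^ e" .
  have Y: "cmod (y ^ e) \<le> s ^ e" using assms by (simp add: norm_power power_mono)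
  have "cmod (fpoly e b y) \<le> cmod (y ^ e) + cmod (\<Sum>j=1..e-1. b j * y ^ j)"
    unfolding fpoly_def by (rule norm_triangle_ineq)
  also have "\<dots> \<le> s ^ e + (e - 1) * s ^ e" using S Y by simp
  also have "\<dots> = e * s ^ e" using assms(5) by (simp add: algebra_simps of_nat_diff)
  finally show ?thesis .
qed



definition Rad :: "nat \<Rightarrow> nat \<Rightarrow> real \<Rightarrow> real" where
  "Rad d e M = 2 * real d * M + real e * 2 ^ (e + 1) + 1"

lemma escape:
  assumes de: "d > e" "e \<ge> 1" and M: "M \<ge> 0"
    and ca: "\<forall>i\<in>{1..d-1}. cmod (a i) \<le> M ^ (d - i)"
    and cb: "\<forall>j\<in>{1..e-1}. cmod (b j) \<le> M ^ (e - j)"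
    and x: "cmod x \<ge> Rad d e M" and rel: "fpoly e b y = fpoly d a x"
  shows "cmod y > 2 * cmod x"
proof (rule ccontr)
  assume "\<not> cmod y > 2 * cmod x"
  then have y: "cmod y \<le> 2 * cmod x" by simp
  define t where "t = cmod x"
  have nn1: "0 \<le> 2 * real d * M" and nn2: "0 \<le> real e * 2 ^ (e + 1)" using M by auto
  have xR: "2 * real d * M + real e * 2 ^ (e + 1) + 1 \<le> t" using x unfolding Rad_def t_def .
  have t1: "t \<ge> 1" using xR nn1 nn2 by linarith
  have tM: "2 * real d * M \<le> t" using xR nn1 nn2 by linarith
  have te: "real e * 2 ^ (e + 1) < t" using xR nn1 nn2 by linarith
  have d1: "1 \<le> 2 * real d" using de by simp
  have "1 * M \<le> 2 * real d * M" using mult_right_mono[OF d1 M] .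
  then have Mt: "M \<le> t" using tM by simp
  have low: "cmod (fpoly d a x) \<ge> t ^ d - real (d - 1) * M * t ^ (d - 1)"
    unfolding t_def by (rule fpoly_lower) (use M Mt ca t_def in auto)
  have up: "cmod (fpoly e b y) \<le> e * (2 * t) ^ e"
    by (rule fpoly_upper) (use M Mt y cb de t_def t1 in auto)
  have dpos: "d = Suc (d - 1)" using de by simp
  have "real (d - 1) * M \<le> t / 2"
  proof -
    have "real (d - 1) * M \<le> real d * M" using M by (intro mult_right_mono) auto
    then show ?thesis using tM by simp
  qed
  then have "real (d - 1) * M * t ^ (d - 1) \<le> t / 2 * t ^ (d - 1)"
    using t1 by (intro mult_right_mono) auto
  then have low2: "cmod (fpoly d a x) \<ge> t ^ d / 2"
  proof -
    have td: "t ^ d = t * t ^ (d - 1)" by (metis dpos power_Suc diff_Suc_1)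
    show ?thesis using low td \<open>real (d - 1) * M * t ^ (d - 1) \<le> t / 2 * t ^ (d - 1)\<close> by simp
  qed
  have "t ^ (e + 1) \<le> t ^ d" using t1 de by (intro power_increasing) auto
  moreover have "real e * 2 ^ e * t ^ e < t ^ (e + 1) / 2"
  proof -
    have "real e * 2 ^ (e+1) * t ^ e < t * t ^ e" using te t1 by (intro mult_strict_right_mono) auto
    then show ?thesis by (simp add: field_simps)
  qed
  ultimately have "real e * 2 ^ e * t ^ e < t ^ d / 2" by simp
  moreover have "e * (2 * t) ^ e = real e * 2 ^ e * t ^ e" by (simp add: power_mult_distrib)
  ultimately have "cmod (fpoly e b y) < cmod (fpoly d a x)" using up low2 by simp
  then show False using rel by simp
qed

lemma path_bound:
  assumes de: "d > e" "e \<ge> 1" and M: "M \<ge> 0"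
    and ca: "\<forall>i\<in>{1..d-1}. cmod (a i) \<le> M ^ (d - i)"
    and cb: "\<forall>j\<in>{1..e-1}. cmod (b j) \<le> M ^ (e - j)"
    and p: "is_path d e a b z x" and bd: "bounded (range x)"
  shows "cmod (x n) < Rad d e M"
proof (rule ccontr)
  assume "\<not> cmod (x n) < Rad d e M"
  then have xn: "cmod (x n) \<ge> Rad d e M" by simp
  have R1: "Rad d e M \<ge> 1" using M unfolding Rad_def by simp
  have rel: "\<And>m. fpoly e b (x (Suc m)) = fpoly d a (x m)" using p unfolding is_path_def by auto
  have grow: "cmod (x (n + k)) \<ge> 2 ^ k * Rad d e M" for k
  proof (induction k)
    case 0 then show ?case using xn by simp
  next
    case (Suc k)
    have "2 ^ k * Rad d e M \<ge> Rad d e M" using R1 by (simp add: order_trans[OF _ mult_right_mono[of 1]])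
    then have "cmod (x (n + k)) \<ge> Rad d e M" using Suc by linarith
    then have "cmod (x (Suc (n + k))) > 2 * cmod (x (n + k))"
      by (intro escape[OF de M ca cb]) (auto simp: rel)
    then show ?case using Suc by simp
  qed
  obtain B where B: "\<And>m. cmod (x m) \<le> B" using bd unfolding bounded_iff by auto
  define k where "k = nat \<lceil>B\<rceil>"
  have "real k < 2 ^ k" by (metis of_nat_less_numeral_power_cancel_iff less_exp)
  moreover have "B \<le> real k" unfolding k_def by linarith
  moreover have "2 ^ k \<le> (2::real) ^ k * Rad d e M" using R1 by simp
  ultimately show False using grow[of k] B[of "n + k"] by linarith
qed



lemma box_compact: "compact {x::nat \<Rightarrow> complex. \<forall>n. cmod (x n) \<le> R}"
proof -
  have "{x::nat \<Rightarrow> complex. \<forall>n. cmod (x n) \<le> R} = PiE UNIV (\<lambda>_. cball 0 R)"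
    by (auto simp: PiE_def Pi_def extensional_def)
  moreover have "compactin (product_topology (\<lambda>_. euclidean) UNIV) (PiE UNIV (\<lambda>_::nat. cball (0::complex) R))"
    by (simp add: compactin_PiE)
  ultimately show ?thesis by (simp add: euclidean_product_topology)
qed

lemma tendsto_coord:
  fixes X :: "'a \<Rightarrow> nat \<Rightarrow> complex"
  assumes "(X \<longlongrightarrow> l) F" shows "((\<lambda>k. X k i) \<longlongrightarrow> l i) F"
  by (rule continuous_on_tendsto_compose[OF continuous_on_product_coordinates assms]) auto

lemma fpoly_tendsto:
  assumes "\<And>i. (\<lambda>k. a k i) \<longlonglongrightarrow> a0 i" "x \<longlonglongrightarrow> x0"
  shows "(\<lambda>k. fpoly d (a k) (x k)) \<longlonglongrightarrow> fpoly d a0 x0"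
  unfolding fpoly_def by (intro tendsto_intros assms)

lemma coeff_Pd_tendsto:
  assumes "d \<ge> 1" "\<And>i. (\<lambda>k. a k i) \<longlonglongrightarrow> a0 i"
  shows "(\<lambda>k. coeff (Pd d (a k)) i) \<longlonglongrightarrow> coeff (Pd d a0) i"
  using assms by (cases "i = d"; cases "i \<in> {1..d-1}") (auto simp: coeff_Pd)

lemma coeff_pderiv_Pd_tendsto:
  assumes "d \<ge> 1" "\<And>i. (\<lambda>k. a k i) \<longlonglongrightarrow> a0 i"
  shows "(\<lambda>k. coeff (pderiv (Pd d (a k))) i) \<longlonglongrightarrow> coeff (pderiv (Pd d a0)) i"
  unfolding coeff_pderiv by (intro tendsto_intros coeff_Pd_tendsto assms)

lemma degree_Pd_minus:
  assumes "d \<ge> 1" shows "degree (Pd d a - [:c:]) = d"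
proof -
  have "degree [:c:] < degree (Pd d a)" using assms by (simp add: degree_Pd)
  then show ?thesis using assms by (simp add: diff_conv_add_uminus degree_add_eq_left degree_Pd)
qed

lemma coeff_Pd_minus_tendsto:
  assumes "d \<ge> 1" "\<And>i. (\<lambda>k. a k i) \<longlonglongrightarrow> a0 i" "c \<longlonglongrightarrow> c0"
  shows "(\<lambda>k. coeff (Pd d (a k) - [:c k:]) i) \<longlonglongrightarrow> coeff (Pd d a0 - [:c0:]) i"
  unfolding coeff_diff by (cases i) (auto intro!: tendsto_intros coeff_Pd_tendsto assms)

lemma root_degree_pos:
  fixes p :: "complex poly"
  assumes "p \<noteq> 0" "poly p w = 0" shows "degree p \<ge> 1"
proof (rule ccontr)
  assume "\<not> degree p \<ge> 1"
  then have d0: "degree p = 0" by simp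
  then have "poly p w = coeff p 0" using poly_sum_upto[of p 0 w] by simp
  moreover have "coeff p 0 \<noteq> 0" using assms(1) d0 by (metis leading_coeff_0_iff)
  ultimately show False using assms(2) by simp
qed

lemma fin_bound:
  fixes f :: "nat \<Rightarrow> nat \<Rightarrow> complex"
  assumes "finite I" "\<And>i. i \<in> I \<Longrightarrow> \<exists>K. \<forall>n. cmod (f n i) \<le> K"
  shows "\<exists>K. \<forall>n. \<forall>i\<in>I. cmod (f n i) \<le> K"
  using assms
proof (induction I rule: finite_induct)
  case empty then show ?case by simp
next
  case (insert x F)
  then obtain K1 where K1: "\<forall>n. \<forall>i\<in>F. cmod (f n i) \<le> K1" by auto
  obtain K2 where K2: "\<forall>n. cmod (f n x) \<le> K2" using insert.prems by blast
  show ?case by (rule exI[of _ "max K1 K2"]) (use K1 K2 in \<open>auto intro: le_max_iff_disj[THEN iffD2]\<close>)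
qed

lemma conv_bound:
  fixes f :: "nat \<Rightarrow> nat \<Rightarrow> complex"
  assumes "\<And>i. (\<lambda>n. f n i) \<longlonglongrightarrow> g i"
  shows "\<exists>K. \<forall>n. \<forall>i\<in>{1..m}. cmod (f n i) \<le> K"
proof (rule fin_bound)
  fix i
  have "Bseq (\<lambda>n. f n i)" using assms[of i] by (intro convergent_imp_Bseq convergentI)
  then show "\<exists>K. \<forall>n. cmod (f n i) \<le> K" unfolding Bseq_def by auto
qed simp

lemma pow_ge_self: "(M::real) \<ge> 1 \<Longrightarrow> k \<ge> 1 \<Longrightarrow> M \<le> M ^ k"
  by (metis power_increasing power_one_right order_trans zero_le_one)



lemma S_closed:
  assumes de: "d > e" "e \<ge> 1"
  shows "closed (S_set d e)"
  unfolding closed_sequential_limits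
proof (intro allI impI, elim conjE)
  fix s and l :: "(nat \<Rightarrow> complex) \<times> (nat \<Rightarrow> complex)"
  assume sS: "\<forall>n. s n \<in> S_set d e" and lim: "s \<longlonglongrightarrow> l"
  obtain a b where l: "l = (a, b)" by (cases l)
  define A where "A k = fst (s k)" for k
  define B where "B k = snd (s k)" for k
  have sAB: "s k = (A k, B k)" for k by (simp add: A_def B_def)
  have cA: "(\<lambda>k. A k i) \<longlonglongrightarrow> a i" for i
    using tendsto_coord[OF tendsto_fst[OF lim], of i] l by (simp add: A_def)
  have cB: "(\<lambda>k. B k i) \<longlonglongrightarrow> b i" for i
    using tendsto_coord[OF tendsto_snd[OF lim], of i] l by (simp add: B_def)
  have AS: "(A k, B k) \<in> S_set d e" for k using sS sAB by metis
  have d1: "d \<ge> 1" and d2: "d \<ge> 2" using de by auto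
  have coeffl: "(a, b) \<in> coeff_space d e"
  proof -
    have "a i = 0" if "i < 1 \<or> i > d - 1" for i
    proof -
      have "\<And>k. A k i = 0" using AS that unfolding S_set_def coeff_space_def by auto
      then have "(\<lambda>k. A k i) \<longlonglongrightarrow> 0" by simp
      then show ?thesis using cA[of i] LIMSEQ_unique by blast
    qed
    moreover have "b j = 0" if "j < 1 \<or> j > e - 1" for j
    proof -
      have "\<And>k. B k j = 0" using AS that unfolding S_set_def coeff_space_def by auto
      then have "(\<lambda>k. B k j) \<longlonglongrightarrow> 0" by simp
      then show ?thesis using cB[of j] LIMSEQ_unique by blast
    qed
    ultimately show ?thesis unfolding coeff_space_def by auto
  qed
  obtain C1 where C1: "\<forall>k. \<forall>i\<in>{1..d-1}. cmod (A k i) \<le> C1" using conv_bound[where f=A and g=a, OF cA] by blast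
  obtain C2 where C2: "\<forall>k. \<forall>i\<in>{1..e-1}. cmod (B k i) \<le> C2" using conv_bound[where f=B and g=b, OF cB] by blast
  define M where "M = max 1 (max C1 C2)"
  have M1: "M \<ge> 1" and M0: "M \<ge> 0" unfolding M_def by auto
  have ca: "\<forall>i\<in>{1..d-1}. cmod (A k i) \<le> M ^ (d - i)" for k
  proof
    fix i assume i: "i \<in> {1..d-1}"
    have "cmod (A k i) \<le> M" using C1 i unfolding M_def by (meson le_max_iff_disj)
    also have "M \<le> M ^ (d - i)" using M1 i by (intro pow_ge_self) auto
    finally show "cmod (A k i) \<le> M ^ (d - i)" .
  qed
  have cb: "\<forall>i\<in>{1..e-1}. cmod (B k i) \<le> M ^ (e - i)" for k
  proof
    fix i assume i: "i \<in> {1..e-1}"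
    have "cmod (B k i) \<le> M" using C2 i unfolding M_def by (meson le_max_iff_disj)
    also have "M \<le> M ^ (e - i)" using M1 i by (intro pow_ge_self) auto
    finally show "cmod (B k i) \<le> M ^ (e - i)" .
  qed
  have "(a, b) \<in> S_set d e"
    unfolding S_set_def
  proof (clarsimp simp: coeffl)
    fix z assume crit: "critical_point d e a b z"
    have "\<exists>zk. (\<forall>k. critical_point d e (A k) (B k) (zk k)) \<and> zk \<longlonglongrightarrow> z"
    proof (cases "deriv (fpoly d a) z = 0")
      case True
      have "\<exists>r. (\<forall>k. poly (pderiv (Pd d (A k))) (r k) = 0) \<and> r \<longlonglongrightarrow> z"
      proof (rule RC[where n = "d - 1" and q = "pderiv (Pd d a)"])
        show "degree (pderiv (Pd d (A k))) = d - 1" for k using degree_Pd[OF d1] by (simp add: degree_pderiv)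
        show "1 \<le> d - 1" using d2 by simp
        show "(\<lambda>k. coeff (pderiv (Pd d (A k))) i) \<longlonglongrightarrow> coeff (pderiv (Pd d a)) i" for i
          by (rule coeff_pderiv_Pd_tendsto[OF d1 cA])
        show "coeff (pderiv (Pd d a)) (d - 1) \<noteq> 0" using d1 by (simp add: coeff_pderiv coeff_Pd)
        show "poly (pderiv (Pd d a)) z = 0" using True by (simp add: deriv_fpoly)
      qed
      then show ?thesis unfolding critical_point_def by (auto simp: deriv_fpoly)
    next
      case False
      then obtain w where w: "deriv (fpoly e b) w = 0" "fpoly e b w = fpoly d a z"
        using crit unfolding critical_point_def by auto
      have e1: "degree (Pd e b) = e" using degree_Pd[OF de(2)] .
      have pne: "pderiv (Pd e b) \<noteq> 0" using de e1 by (simp add: pderiv_eq_0_iff)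
      have "degree (pderiv (Pd e b)) \<ge> 1"
        by (rule root_degree_pos[OF pne]) (use w in \<open>simp add: deriv_fpoly\<close>)
      then have e2: "e - 1 \<ge> 1" using e1 by (simp add: degree_pderiv)
      have "\<exists>r. (\<forall>k. poly (pderiv (Pd e (B k))) (r k) = 0) \<and> r \<longlonglongrightarrow> w"
      proof (rule RC[where n = "e - 1" and q = "pderiv (Pd e b)"])
        show "degree (pderiv (Pd e (B k))) = e - 1" for k using degree_Pd[OF de(2)] by (simp add: degree_pderiv)
        show "1 \<le> e - 1" using e2 .
        show "(\<lambda>k. coeff (pderiv (Pd e (B k))) i) \<longlonglongrightarrow> coeff (pderiv (Pd e b)) i" for i
          by (rule coeff_pderiv_Pd_tendsto[OF de(2) cB])
        show "coeff (pderiv (Pd e b)) (e - 1) \<noteq> 0" using de by (simp add: coeff_pderiv coeff_Pd)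
        show "poly (pderiv (Pd e b)) w = 0" using w by (simp add: deriv_fpoly)
      qed
      then obtain wk where wk: "\<And>k. poly (pderiv (Pd e (B k))) (wk k) = 0" "wk \<longlonglongrightarrow> w" by blast
      have ck: "(\<lambda>k. fpoly e (B k) (wk k)) \<longlonglongrightarrow> fpoly e b w"
        by (rule fpoly_tendsto[OF cB wk(2)])
      have "\<exists>r. (\<forall>k. poly (Pd d (A k) - [:fpoly e (B k) (wk k):]) (r k) = 0) \<and> r \<longlonglongrightarrow> z"
      proof (rule RC[where n = "d" and q = "Pd d a - [:fpoly e b w:]"])
        show "degree (Pd d (A k) - [:fpoly e (B k) (wk k):]) = d" for k by (rule degree_Pd_minus[OF d1])
        show "1 \<le> d" using d1 .
        show "(\<lambda>k. coeff (Pd d (A k) - [:fpoly e (B k) (wk k):]) i) \<longlonglongrightarrow> coeff (Pd d a - [:fpoly e b w:]) i" for i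
          by (rule coeff_Pd_minus_tendsto[OF d1 cA ck])
        show "coeff (Pd d a - [:fpoly e b w:]) d \<noteq> 0" using d1
          by (cases d) (auto simp: coeff_Pd)
        show "poly (Pd d a - [:fpoly e b w:]) z = 0" using w by (simp add: poly_Pd)
      qed
      then obtain zk where zk: "\<And>k. poly (Pd d (A k) - [:fpoly e (B k) (wk k):]) (zk k) = 0" "zk \<longlonglongrightarrow> z"
        by blast
      have "critical_point d e (A k) (B k) (zk k)" for k
        unfolding critical_point_def using wk(1)[of k] zk(1)[of k]
        by (intro disjI2 exI[of _ "wk k"]) (simp add: deriv_fpoly poly_Pd)
      with zk(2) show ?thesis by blast
    qed
    then obtain zk where zk: "\<And>k. critical_point d e (A k) (B k) (zk k)" "zk \<longlonglongrightarrow> z" by blast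
    have "\<forall>k. \<exists>x. is_path d e (A k) (B k) (zk k) x \<and> bounded (range x)"
      using AS zk(1) unfolding S_set_def by blast
    then obtain X where X: "\<And>k. is_path d e (A k) (B k) (zk k) (X k)" "\<And>k. bounded (range (X k))"
      by metis
    define R where "R = Rad d e M"
    have Xb: "X k \<in> {x. \<forall>n. cmod (x n) \<le> R}" for k
      using path_bound[OF de M0 ca cb X(1) X(2)] unfolding R_def by (auto intro: less_imp_le)
    obtain Y h where Y: "Y \<in> {x. \<forall>n. cmod (x n) \<le> R}" and h: "strict_mono h" and XY: "(X \<circ> h) \<longlonglongrightarrow> Y"
      using compact_imp_seq_compact[OF box_compact, of R] Xb unfolding seq_compact_def by metis
    have pt: "(\<lambda>k. X (h k) n) \<longlonglongrightarrow> Y n" for n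
      using tendsto_coord[OF XY, of n] by simp
    have cAh: "(\<lambda>k. A (h k) i) \<longlonglongrightarrow> a i" for i
      using LIMSEQ_subseq_LIMSEQ[OF cA h] by (simp add: o_def)
    have cBh: "(\<lambda>k. B (h k) i) \<longlonglongrightarrow> b i" for i
      using LIMSEQ_subseq_LIMSEQ[OF cB h] by (simp add: o_def)
    have "Y 0 = z"
    proof -
      have "(\<lambda>k. X (h k) 0) = (\<lambda>k. zk (h k))" using X(1) unfolding is_path_def by auto
      moreover have "(\<lambda>k. zk (h k)) \<longlonglongrightarrow> z" using LIMSEQ_subseq_LIMSEQ[OF zk(2) h] by (simp add: o_def)
      ultimately show ?thesis using pt[of 0] by (metis LIMSEQ_unique)
    qed
    moreover have "fpoly e b (Y (Suc n)) = fpoly d a (Y n)" for n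
    proof -
      have "(\<lambda>k. fpoly e (B (h k)) (X (h k) (Suc n))) \<longlonglongrightarrow> fpoly e b (Y (Suc n))"
        by (rule fpoly_tendsto[OF cBh pt])
      moreover have "(\<lambda>k. fpoly d (A (h k)) (X (h k) n)) \<longlonglongrightarrow> fpoly d a (Y n)"
        by (rule fpoly_tendsto[OF cAh pt])
      moreover have "(\<lambda>k. fpoly e (B (h k)) (X (h k) (Suc n))) = (\<lambda>k. fpoly d (A (h k)) (X (h k) n))"
        using X(1) unfolding is_path_def by auto
      ultimately show ?thesis by (metis LIMSEQ_unique)
    qed
    moreover have "bounded (range Y)" using Y unfolding bounded_iff by auto
    ultimately show "\<exists>x. is_path d e a b z x \<and> bounded (range x)"
      unfolding is_path_def by blast
  qed
  then show "l \<in> S_set d e" using l by simp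
qed



lemma powr_inv_pow:
  fixes x :: real assumes "x \<ge> 0" "k \<ge> 1"
  shows "(x powr (1 / real k)) ^ k = x"
proof (cases "x = 0")
  case True then show ?thesis using assms by simp
next
  case False
  then have xp: "x > 0" using assms by simp
  have "(x powr (1 / real k)) ^ k = (x powr (1 / real k)) powr (real k)"
    using xp by (simp add: powr_realpow)
  also have "\<dots> = x" using assms xp by (simp add: powr_powr)
  finally show ?thesis .
qed

lemma powr_le_pow:
  fixes x :: real assumes "x \<ge> 0" "k \<ge> 1" "x powr (1 / real k) \<le> M"
  shows "x \<le> M ^ k"
proof -
  have "x = (x powr (1 / real k)) ^ k" using powr_inv_pow[OF assms(1,2)] by simp
  also have "\<dots> \<le> M ^ k" using assms by (intro power_mono) auto
  finally show ?thesis .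
qed

definition mu :: "nat \<Rightarrow> nat \<Rightarrow> (nat \<Rightarrow> complex) \<Rightarrow> (nat \<Rightarrow> complex) \<Rightarrow> real" where
  "mu d e a b = Max ((\<lambda>i. cmod (a i) powr (1 / real (d - i))) ` {1..d-1} \<union>
                     (\<lambda>j. cmod (b j) powr (1 / real (e - j))) ` {1..e-1})"

lemma mu_ge_a:
  assumes "i \<in> {1..d-1}" shows "cmod (a i) \<le> mu d e a b ^ (d - i)"
proof (rule powr_le_pow)
  show "cmod (a i) powr (1 / real (d - i)) \<le> mu d e a b"
    unfolding mu_def using assms by (intro Max_ge) auto
qed (use assms in auto)

lemma mu_ge_b:
  assumes "j \<in> {1..e-1}" shows "cmod (b j) \<le> mu d e a b ^ (e - j)"
proof (rule powr_le_pow)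
  show "cmod (b j) powr (1 / real (e - j)) \<le> mu d e a b"
    unfolding mu_def using assms by (intro Max_ge) auto
qed (use assms in auto)

lemma mu_ge_elem:
  assumes "i \<in> {1..d-1}" shows "cmod (a i) powr (1 / real (d - i)) \<le> mu d e a b"
  unfolding mu_def using assms by (intro Max_ge) auto

lemma mu_nonneg:
  assumes "d \<ge> 2" shows "mu d e a b \<ge> 0"
proof -
  have "cmod (a 1) powr (1 / real (d - 1)) \<le> mu d e a b"
    by (rule mu_ge_elem) (use assms in auto)
  moreover have "cmod (a 1) powr (1 / real (d - 1)) \<ge> 0" by simp
  ultimately show ?thesis by linarith
qed

lemma mu_attained:
  assumes "d \<ge> 2"
  shows "(\<exists>i\<in>{1..d-1}. cmod (a i) = mu d e a b ^ (d - i)) \<or> (\<exists>j\<in>{1..e-1}. cmod (b j) = mu d e a b ^ (e - j))"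
proof -
  let ?S = "(\<lambda>i. cmod (a i) powr (1 / real (d - i))) ` {1..d-1} \<union>
            (\<lambda>j. cmod (b j) powr (1 / real (e - j))) ` {1..e-1}"
  have "mu d e a b \<in> ?S" unfolding mu_def using assms by (intro Max_in) auto
  then show ?thesis
  proof
    assume "mu d e a b \<in> (\<lambda>i. cmod (a i) powr (1 / real (d - i))) ` {1..d-1}"
    then obtain i where i: "i \<in> {1..d-1}" "mu d e a b = cmod (a i) powr (1 / real (d - i))" by auto
    have "mu d e a b ^ (d - i) = cmod (a i)" by (subst i(2)) (rule powr_inv_pow; use i in auto)
    then show ?thesis using i(1) by (metis bexI)
  next
    assume "mu d e a b \<in> (\<lambda>j. cmod (b j) powr (1 / real (e - j))) ` {1..e-1}"
    then obtain j where j: "j \<in> {1..e-1}" "mu d e a b = cmod (b j) powr (1 / real (e - j))" by auto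
    have "mu d e a b ^ (e - j) = cmod (b j)" by (subst j(2)) (rule powr_inv_pow; use j in auto)
    then show ?thesis using j(1) by (metis bexI)
  qed
qed

definition nrm :: "nat \<Rightarrow> real \<Rightarrow> (nat \<Rightarrow> complex) \<Rightarrow> nat \<Rightarrow> complex" where
  "nrm d M a = (\<lambda>i. a i / of_real M ^ (d - i))"

lemma scale_fpoly:
  assumes "M \<noteq> 0"
  shows "fpoly d a (of_real M * u) = of_real M ^ d * fpoly d (nrm d M a) u"
proof -
  let ?M = "of_real M :: complex"
  have "(\<Sum>i=1..d-1. a i * (?M * u) ^ i) = (\<Sum>i=1..d-1. ?M ^ d * (nrm d M a i * u ^ i))"
  proof (rule sum.cong[OF refl])
    fix i assume i: "i \<in> {1..d-1}"
    have "d = (d - i) + i" using i by auto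
    then have "?M ^ d = ?M ^ (d - i) * ?M ^ i" by (metis power_add)
    then show "a i * (?M * u) ^ i = ?M ^ d * (nrm d M a i * u ^ i)"
      using assms by (simp add: nrm_def power_mult_distrib field_simps)
  qed
  then show ?thesis
    unfolding fpoly_def by (simp add: sum_distrib_left power_mult_distrib algebra_simps)
qed

lemma scale_deriv:
  assumes "M \<noteq> 0" "poly (pderiv (Pd d (nrm d M a))) c = 0"
  shows "deriv (fpoly d a) (of_real M * c) = 0"
proof -
  let ?M = "of_real M :: complex"
  have Mne: "?M \<noteq> 0" using assms by simp
  have feq: "fpoly d a = (\<lambda>x. ?M ^ d * poly (Pd d (nrm d M a)) (x / ?M))"
  proof
    fix x
    have "fpoly d a x = fpoly d a (?M * (x / ?M))" using Mne by simp
    also have "\<dots> = ?M ^ d * fpoly d (nrm d M a) (x / ?M)" by (rule scale_fpoly[OF assms(1)])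
    finally show "fpoly d a x = ?M ^ d * poly (Pd d (nrm d M a)) (x / ?M)"
      by (simp add: poly_Pd)
  qed
  have "((\<lambda>x. ?M ^ d * poly (Pd d (nrm d M a)) (x / ?M)) has_field_derivative
          ?M ^ d * (poly (pderiv (Pd d (nrm d M a))) ((?M * c) / ?M) * (1 / ?M))) (at (?M * c))"
    by (intro DERIV_cmult DERIV_chain2[OF poly_DERIV] DERIV_cdivide[OF DERIV_ident])
  then have "deriv (fpoly d a) (?M * c) = ?M ^ d * (poly (pderiv (Pd d (nrm d M a))) ((?M * c) / ?M) * (1 / ?M))"
    unfolding feq by (rule DERIV_imp_deriv)
  then show ?thesis using assms Mne by simp
qed



definition K1 :: "nat \<Rightarrow> nat \<Rightarrow> ((nat \<Rightarrow> complex) \<times> (nat \<Rightarrow> complex)) set" where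
  "K1 d e = {p. (\<forall>i. cmod (fst p i) \<le> 1) \<and> (\<forall>j. cmod (snd p j) \<le> 1) \<and>
      ((\<exists>i\<in>{1..d-1}. cmod (fst p i) = 1) \<or> (\<exists>j\<in>{1..e-1}. cmod (snd p j) = 1))}"

lemma cont_fst_i: "continuous_on UNIV (\<lambda>p::(nat \<Rightarrow> complex) \<times> 'b::topological_space. cmod (fst p i))"
  by (intro continuous_on_norm continuous_on_compose2[OF continuous_on_product_coordinates continuous_on_fst])
     (auto intro: continuous_on_id)

lemma cont_snd_i: "continuous_on UNIV (\<lambda>p::'b::topological_space \<times> (nat \<Rightarrow> complex). cmod (snd p i))"
  by (intro continuous_on_norm continuous_on_compose2[OF continuous_on_product_coordinates continuous_on_snd])
     (auto intro: continuous_on_id)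

lemma K1_compact: "compact (K1 d e)"
proof -
  let ?B = "{x::nat \<Rightarrow> complex. \<forall>n. cmod (x n) \<le> 1}"
  have c1: "closed {p::(nat \<Rightarrow> complex) \<times> (nat \<Rightarrow> complex). \<forall>i. cmod (fst p i) \<le> 1}"
    by (intro closed_Collect_all closed_Collect_le cont_fst_i continuous_on_const)
  have c2: "closed {p::(nat \<Rightarrow> complex) \<times> (nat \<Rightarrow> complex). \<forall>j. cmod (snd p j) \<le> 1}"
    by (intro closed_Collect_all closed_Collect_le cont_snd_i continuous_on_const)
  have c3: "closed {p::(nat \<Rightarrow> complex) \<times> (nat \<Rightarrow> complex). \<exists>i\<in>{1..d-1}. cmod (fst p i) = 1}"
  proof -
    have "{p::(nat \<Rightarrow> complex) \<times> (nat \<Rightarrow> complex). \<exists>i\<in>{1..d-1}. cmod (fst p i) = 1} =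
          (\<Union>i\<in>{1..d-1}. {p. cmod (fst p i) = 1})" by auto
    moreover have "closed (\<Union>i\<in>{1..d-1}. {p::(nat \<Rightarrow> complex) \<times> (nat \<Rightarrow> complex). cmod (fst p i) = 1})"
      by (intro closed_UN finite_atLeastAtMost ballI closed_Collect_eq cont_fst_i continuous_on_const)
    ultimately show ?thesis by simp
  qed
  have c4: "closed {p::(nat \<Rightarrow> complex) \<times> (nat \<Rightarrow> complex). \<exists>j\<in>{1..e-1}. cmod (snd p j) = 1}"
  proof -
    have "{p::(nat \<Rightarrow> complex) \<times> (nat \<Rightarrow> complex). \<exists>j\<in>{1..e-1}. cmod (snd p j) = 1} =
          (\<Union>j\<in>{1..e-1}. {p. cmod (snd p j) = 1})" by auto
    moreover have "closed (\<Union>j\<in>{1..e-1}. {p::(nat \<Rightarrow> complex) \<times> (nat \<Rightarrow> complex). cmod (snd p j) = 1})"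
      by (intro closed_UN finite_atLeastAtMost ballI closed_Collect_eq cont_snd_i continuous_on_const)
    ultimately show ?thesis by simp
  qed
  have cl: "closed (K1 d e)"
  proof -
    have "K1 d e = {p. \<forall>i. cmod (fst p i) \<le> 1} \<inter> {p. \<forall>j. cmod (snd p j) \<le> 1} \<inter>
       ({p. \<exists>i\<in>{1..d-1}. cmod (fst p i) = 1} \<union> {p. \<exists>j\<in>{1..e-1}. cmod (snd p j) = 1})"
      unfolding K1_def by auto
    then show ?thesis using c1 c2 c3 c4 by (simp add: closed_Int closed_Un)
  qed
  have "compact (?B \<times> ?B)" by (intro compact_Times box_compact)
  moreover have "K1 d e = (?B \<times> ?B) \<inter> K1 d e" unfolding K1_def by auto
  ultimately show ?thesis using cl by (metis compact_Int_closed)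
qed

lemma scaled_path:
  assumes de: "d > e" "e \<ge> 1" and M1: "M \<ge> 1" and MK: "M \<ge> real e * 2 ^ (e + 1) + 1"
    and ca: "\<forall>i\<in>{1..d-1}. cmod (a i) \<le> M ^ (d - i)"
    and cb: "\<forall>j\<in>{1..e-1}. cmod (b j) \<le> M ^ (e - j)"
    and p: "is_path d e a b z x" and bd: "bounded (range x)"
  shows "cmod (x n / of_real M) \<le> 2 * real d + 1"
    and "cmod (fpoly d (nrm d M a) (x n / of_real M)) \<le> real e * (2 * real d + 1) ^ e / M"
proof -
  have M0: "M \<ge> 0" using M1 by simp
  have xb: "cmod (x m) \<le> (2 * real d + 1) * M" for m
  proof -
    have "cmod (x m) < Rad d e M" by (rule path_bound[OF de M0 ca cb p bd])
    then show ?thesis unfolding Rad_def using MK by (simp add: algebra_simps)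
  qed
  have ub: "cmod (x m / of_real M) \<le> 2 * real d + 1" for m
    using xb[of m] M1 by (simp add: norm_divide field_simps)
  then show "cmod (x n / of_real M) \<le> 2 * real d + 1" .
  let ?M = "of_real M :: complex"
  have Mne: "?M \<noteq> 0" using M1 by simp
  define u where "u = x n / ?M"
  define v where "v = x (Suc n) / ?M"
  have rel: "fpoly e b (x (Suc n)) = fpoly d a (x n)" using p unfolding is_path_def by auto
  have "fpoly e b (x (Suc n)) = ?M ^ e * fpoly e (nrm e M b) v"
    using scale_fpoly[of M e b v] M1 Mne unfolding v_def by simp
  moreover have "fpoly d a (x n) = ?M ^ d * fpoly d (nrm d M a) u"
    using scale_fpoly[of M d a u] M1 Mne unfolding u_def by simp
  ultimately have eq: "?M ^ d * fpoly d (nrm d M a) u = ?M ^ e * fpoly e (nrm e M b) v" using rel by simp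
  have dsplit: "d = (d - e) + e" using de by simp
  have eq2: "fpoly d (nrm d M a) u = fpoly e (nrm e M b) v / ?M ^ (d - e)"
    using eq Mne by (subst (asm) dsplit) (simp add: power_add field_simps)
  have cbn: "\<forall>j\<in>{1..e-1}. cmod (nrm e M b j) \<le> 1 ^ (e - j)"
  proof
    fix j assume j: "j \<in> {1..e-1}"
    have "cmod (b j) \<le> M ^ (e - j)" using cb j by auto
    then show "cmod (nrm e M b j) \<le> 1 ^ (e - j)" using M1
      by (simp add: nrm_def norm_divide norm_power divide_le_eq_1)
  qed
  have gv: "cmod (fpoly e (nrm e M b) v) \<le> real e * (2 * real d + 1) ^ e"
    by (rule fpoly_upper[where M = 1]) (use cbn ub[of "Suc n"] de in \<open>auto simp: v_def\<close>)
  have "M \<le> M ^ (d - e)" using M1 de by (intro pow_ge_self) auto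
  then have "cmod (fpoly d (nrm d M a) u) \<le> real e * (2 * real d + 1) ^ e / M"
    using gv M1 unfolding eq2
    by (simp add: norm_divide norm_power frac_le)
  then show "cmod (fpoly d (nrm d M a) (x n / of_real M)) \<le> real e * (2 * real d + 1) ^ e / M"
    by (simp add: u_def)
qed



lemma fpoly_zero: "d \<ge> 1 \<Longrightarrow> fpoly d a 0 = 0"
  unfolding fpoly_def by (auto intro!: sum.neutral)

lemma pow_bound:
  assumes "cmod u \<le> r"
  shows "cmod u ^ d \<le> cmod (fpoly d a u) + (\<Sum>i=1..d-1. cmod (a i) * r ^ i)"
proof -
  have "u ^ d = fpoly d a u - (\<Sum>i=1..d-1. a i * u ^ i)" unfolding fpoly_def by simp
  then have "cmod u ^ d \<le> cmod (fpoly d a u) + cmod (\<Sum>i=1..d-1. a i * u ^ i)"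
    by (metis norm_power norm_triangle_ineq4)
  also have "cmod (\<Sum>i=1..d-1. a i * u ^ i) \<le> (\<Sum>i=1..d-1. cmod (a i) * r ^ i)"
    by (rule order_trans[OF norm_sum sum_mono])
       (use assms in \<open>auto simp: norm_mult norm_power intro!: mult_left_mono power_mono\<close>)
  finally show ?thesis by simp
qed

lemma only_crit_Pd:
  assumes "d \<ge> 1" "\<And>z. poly (pderiv (Pd d a)) z = 0 \<Longrightarrow> poly (Pd d a) z = 0" "i \<in> {1..d-1}"
  shows "a i = 0"
proof -
  have "coeff (Pd d a) i = 0"
  proof (rule only_crit_roots[where n = d])
    show "degree (Pd d a) = d" using assms by (simp add: degree_Pd)
    show "lead_coeff (Pd d a) = 1" using assms by (simp add: degree_Pd coeff_Pd)
    show "poly (Pd d a) 0 = 0" using assms by (simp add: poly_Pd fpoly_zero)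
  qed (use assms in auto)
  moreover have "i \<noteq> d" using assms(3) by auto
  ultimately show ?thesis using assms by (simp add: coeff_Pd)
qed



lemma mu_bounded:
  assumes de: "d > e" "e \<ge> 1"
  shows "\<exists>K. \<forall>a b. (a, b) \<in> S_set d e \<longrightarrow> mu d e a b \<le> K"
proof (rule ccontr)
  assume H: "\<not> (\<exists>K. \<forall>a b. (a, b) \<in> S_set d e \<longrightarrow> mu d e a b \<le> K)"
  have "\<forall>k::nat. \<exists>p. p \<in> S_set d e \<and> mu d e (fst p) (snd p) > real k"
  proof
    fix k :: nat
    obtain a b where "(a, b) \<in> S_set d e" "\<not> mu d e a b \<le> real k" using H by blast
    then show "\<exists>p. p \<in> S_set d e \<and> mu d e (fst p) (snd p) > real k" by (intro exI[of _ "(a, b)"]) auto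
  qed
  then obtain s where s: "\<And>k. s k \<in> S_set d e" "\<And>k. mu d e (fst (s k)) (snd (s k)) > real k"
    by metis
  define A where "A k = fst (s k)" for k
  define B where "B k = snd (s k)" for k
  define M where "M k = mu d e (A k) (B k)" for k
  have AS: "(A k, B k) \<in> S_set d e" for k using s(1)[of k] by (simp add: A_def B_def)
  have Mgt: "M k > real k" for k using s(2)[of k] by (simp add: M_def A_def B_def)
  have d1: "d \<ge> 1" and d2: "d \<ge> 2" using de by auto
  have Mpos: "M k > 0" for k using Mgt[of k] by (smt (verit) of_nat_0_le_iff)
  have caM: "\<forall>i\<in>{1..d-1}. cmod (A k i) \<le> M k ^ (d - i)" for k
    unfolding M_def using mu_ge_a by blast
  have cbM: "\<forall>j\<in>{1..e-1}. cmod (B k j) \<le> M k ^ (e - j)" for k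
    unfolding M_def using mu_ge_b by blast
  have zeroA: "A k i = 0" if "i \<notin> {1..d-1}" for k i
    using AS[of k] that unfolding S_set_def coeff_space_def by (cases "i = 0") auto
  have zeroB: "B k j = 0" if "j \<notin> {1..e-1}" for k j
    using AS[of k] that unfolding S_set_def coeff_space_def by (cases "j = 0") auto
  define al where "al k = nrm d (M k) (A k)" for k
  define be where "be k = nrm e (M k) (B k)" for k
  have inK: "(al k, be k) \<in> K1 d e" for k
  proof -
    have Mk: "M k > 0" by (rule Mpos)
    have na: "cmod (al k i) = cmod (A k i) / M k ^ (d - i)" for i
      using Mk by (simp add: al_def nrm_def norm_divide norm_power)
    have nb: "cmod (be k j) = cmod (B k j) / M k ^ (e - j)" for j
      using Mk by (simp add: be_def nrm_def norm_divide norm_power)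
    have 1: "cmod (al k i) \<le> 1" for i
    proof (cases "i \<in> {1..d-1}")
      case True then show ?thesis using caM[of k] Mk unfolding na by (simp add: divide_le_eq_1)
    next
      case False then show ?thesis unfolding na using zeroA by simp
    qed
    have 2: "cmod (be k j) \<le> 1" for j
    proof (cases "j \<in> {1..e-1}")
      case True then show ?thesis using cbM[of k] Mk unfolding nb by (simp add: divide_le_eq_1)
    next
      case False then show ?thesis unfolding nb using zeroB by simp
    qed
    have 3: "(\<exists>i\<in>{1..d-1}. cmod (al k i) = 1) \<or> (\<exists>j\<in>{1..e-1}. cmod (be k j) = 1)"
    proof -
      have "(\<exists>i\<in>{1..d-1}. cmod (A k i) = M k ^ (d - i)) \<or> (\<exists>j\<in>{1..e-1}. cmod (B k j) = M k ^ (e - j))"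
        using mu_attained[OF d2, of "A k" e "B k"] unfolding M_def .
      then show ?thesis
      proof
        assume "\<exists>i\<in>{1..d-1}. cmod (A k i) = M k ^ (d - i)"
        then obtain i where i: "i \<in> {1..d-1}" "cmod (A k i) = M k ^ (d - i)" by blast
        then have "cmod (al k i) = 1" unfolding na using Mk by simp
        then show ?thesis using i(1) by blast
      next
        assume "\<exists>j\<in>{1..e-1}. cmod (B k j) = M k ^ (e - j)"
        then obtain j where j: "j \<in> {1..e-1}" "cmod (B k j) = M k ^ (e - j)" by blast
        then have "cmod (be k j) = 1" unfolding nb using Mk by simp
        then show ?thesis using j(1) by blast
      qed
    qed
    show ?thesis unfolding K1_def using 1 2 3 by auto
  qed
  obtain l h where l: "l \<in> K1 d e" and h: "strict_mono h" and lim: "((\<lambda>k. (al k, be k)) \<circ> h) \<longlonglongrightarrow> l"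
  proof -
    have inK': "\<forall>k. (\<lambda>k. (al k, be k)) k \<in> K1 d e" using inK by simp
    obtain l r where "l \<in> K1 d e" "strict_mono r" "((\<lambda>k. (al k, be k)) \<circ> r) \<longlonglongrightarrow> l"
      by (rule seq_compactE[OF compact_imp_seq_compact[OF K1_compact] inK'])
    then show ?thesis by (rule that)
  qed
  obtain as bs where lab: "l = (as, bs)" by (cases l)
  have cal: "(\<lambda>k. al (h k) i) \<longlonglongrightarrow> as i" for i
    using tendsto_coord[OF tendsto_fst[OF lim], of i] lab by (simp add: o_def)
  have cbe: "(\<lambda>k. be (h k) i) \<longlonglongrightarrow> bs i" for i
    using tendsto_coord[OF tendsto_snd[OF lim], of i] lab by (simp add: o_def)
  define Mh where "Mh k = M (h k)" for k
  have Mh_ge: "Mh k \<ge> real k" for k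
    using Mgt[of "h k"] seq_suble[OF h, of k] unfolding Mh_def by linarith
  have Mhne: "Mh k \<noteq> 0" for k using Mpos[of "h k"] by (simp add: Mh_def)
  define r where "r = 2 * real d + 1"
  define K0 where "K0 = real e * 2 ^ (e + 1) + 1"
  define C where "C = real e * r ^ e"
  have K01: "K0 \<ge> 1" unfolding K0_def by simp
  have ev: "eventually (\<lambda>k. Mh k \<ge> 1 \<and> Mh k \<ge> K0) sequentially"
    unfolding eventually_sequentially
  proof (intro exI allI impI)
    fix k assume "nat \<lceil>K0\<rceil> \<le> k"
    then have "K0 \<le> real k" by linarith
    then show "Mh k \<ge> 1 \<and> Mh k \<ge> K0" using Mh_ge[of k] K01 by linarith
  qed
  have Minf: "(\<lambda>k. C / Mh k) \<longlonglongrightarrow> 0"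
  proof (rule tendsto_divide_0[OF tendsto_const])
    show "filterlim Mh at_infinity sequentially"
    proof (rule filterlim_at_top_imp_at_infinity, unfold filterlim_at_top, intro allI)
      fix Z :: real
      show "eventually (\<lambda>k. Z \<le> Mh k) sequentially"
        unfolding eventually_sequentially
        by (rule exI[of _ "nat \<lceil>Z\<rceil>"]) (use Mh_ge in \<open>smt (verit) of_nat_le_iff real_nat_ceiling_ge\<close>)
    qed
  qed
  have al_h: "al (h k) = nrm d (Mh k) (A (h k))" for k by (simp add: al_def Mh_def)
  have be_h: "be (h k) = nrm e (Mh k) (B (h k))" for k by (simp add: be_def Mh_def)
  show False
  proof (cases "\<exists>c. poly (pderiv (Pd d as)) c = 0 \<and> poly (Pd d as) c \<noteq> 0")
    case True
    then obtain c where c: "poly (pderiv (Pd d as)) c = 0" "poly (Pd d as) c \<noteq> 0" by blast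
    have "\<exists>r. (\<forall>k. poly (pderiv (Pd d (al (h k)))) (r k) = 0) \<and> r \<longlonglongrightarrow> c"
    proof (rule RC[where n = "d - 1" and q = "pderiv (Pd d as)"])
      show "degree (pderiv (Pd d (al (h k)))) = d - 1" for k using degree_Pd[OF d1] by (simp add: degree_pderiv)
      show "1 \<le> d - 1" using d2 by simp
      show "(\<lambda>k. coeff (pderiv (Pd d (al (h k)))) i) \<longlonglongrightarrow> coeff (pderiv (Pd d as)) i" for i
        by (rule coeff_pderiv_Pd_tendsto[OF d1 cal])
      show "coeff (pderiv (Pd d as)) (d - 1) \<noteq> 0" using d1 by (simp add: coeff_pderiv coeff_Pd)
      show "poly (pderiv (Pd d as)) c = 0" by (rule c(1))
    qed
    then obtain ck where ck: "\<And>k. poly (pderiv (Pd d (al (h k)))) (ck k) = 0" "ck \<longlonglongrightarrow> c" by blast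
    have crit: "critical_point d e (A (h k)) (B (h k)) (of_real (Mh k) * ck k)" for k
      unfolding critical_point_def using scale_deriv[OF Mhne[of k], where d=d and a="A (h k)" and c="ck k"] ck(1)[of k] al_h[of k]
      by simp
    have "\<forall>k. \<exists>x. is_path d e (A (h k)) (B (h k)) (of_real (Mh k) * ck k) x \<and> bounded (range x)"
      using AS crit unfolding S_set_def by blast
    then obtain X where X: "\<And>k. is_path d e (A (h k)) (B (h k)) (of_real (Mh k) * ck k) (X k)"
      "\<And>k. bounded (range (X k))" by metis
    have "eventually (\<lambda>k. norm (fpoly d (al (h k)) (ck k)) \<le> C / Mh k) sequentially"
      using ev
    proof eventually_elim
      case (elim k)
      have "cmod (fpoly d (nrm d (Mh k) (A (h k))) (X k 0 / of_real (Mh k))) \<le> real e * (2 * real d + 1) ^ e / Mh k"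
        by (rule scaled_path(2)[OF de _ _ _ _ X(1) X(2)])
           (use elim caM[of "h k"] cbM[of "h k"] in \<open>auto simp: K0_def Mh_def\<close>)
      moreover have "X k 0 / of_real (Mh k) = ck k" using X(1)[of k] Mhne[of k] unfolding is_path_def by simp
      ultimately show ?case by (simp add: al_h C_def r_def)
    qed
    then have "(\<lambda>k. fpoly d (al (h k)) (ck k)) \<longlonglongrightarrow> 0"
      by (rule Lim_null_comparison[OF _ Minf])
    moreover have "(\<lambda>k. fpoly d (al (h k)) (ck k)) \<longlonglongrightarrow> fpoly d as c"
      by (rule fpoly_tendsto[OF cal ck(2)])
    ultimately have "fpoly d as c = 0" using LIMSEQ_unique by blast
    then show False using c(2) by (simp add: poly_Pd)
  next
    case False
    then have cr: "\<And>c. poly (pderiv (Pd d as)) c = 0 \<Longrightarrow> poly (Pd d as) c = 0" by blast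
    have as0: "as i = 0" if "i \<in> {1..d-1}" for i by (rule only_crit_Pd[OF d1 cr that])
    obtain j where j: "j \<in> {1..e-1}" "cmod (bs j) = 1"
      using l as0 unfolding K1_def lab by auto
    have e2: "e - 1 \<ge> 1" using j(1) by auto
    have "\<exists>w. poly (pderiv (Pd e bs)) w = 0 \<and> poly (Pd e bs) w \<noteq> 0"
    proof (rule ccontr)
      assume "\<not> ?thesis"
      then have "\<And>c. poly (pderiv (Pd e bs)) c = 0 \<Longrightarrow> poly (Pd e bs) c = 0" by blast
      then have "bs j = 0" by (rule only_crit_Pd[OF de(2) _ j(1)])
      then show False using j(2) by simp
    qed
    then obtain w where w: "poly (pderiv (Pd e bs)) w = 0" "poly (Pd e bs) w \<noteq> 0" by blast
    have "\<exists>r. (\<forall>k. poly (pderiv (Pd e (be (h k)))) (r k) = 0) \<and> r \<longlonglongrightarrow> w"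
    proof (rule RC[where n = "e - 1" and q = "pderiv (Pd e bs)"])
      show "degree (pderiv (Pd e (be (h k)))) = e - 1" for k using degree_Pd[OF de(2)] by (simp add: degree_pderiv)
      show "1 \<le> e - 1" using e2 .
      show "(\<lambda>k. coeff (pderiv (Pd e (be (h k)))) i) \<longlonglongrightarrow> coeff (pderiv (Pd e bs)) i" for i
        by (rule coeff_pderiv_Pd_tendsto[OF de(2) cbe])
      show "coeff (pderiv (Pd e bs)) (e - 1) \<noteq> 0" using de by (simp add: coeff_pderiv coeff_Pd)
      show "poly (pderiv (Pd e bs)) w = 0" by (rule w(1))
    qed
    then obtain wk where wk: "\<And>k. poly (pderiv (Pd e (be (h k)))) (wk k) = 0" "wk \<longlonglongrightarrow> w" by blast
    define W where "W k = of_real (Mh k) * wk k" for k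
    have dW: "deriv (fpoly e (B (h k))) (W k) = 0" for k
      unfolding W_def using scale_deriv[OF Mhne[of k], where d=e and a="B (h k)" and c="wk k"] wk(1)[of k] be_h[of k] by simp
    have "\<exists>z. fpoly d (A (h k)) z = fpoly e (B (h k)) (W k)" for k
    proof -
      obtain z where "poly (Pd d (A (h k)) - [:fpoly e (B (h k)) (W k):]) z = 0"
        using root_near[OF degree_Pd_minus[OF d1] d1] by blast
      then show ?thesis by (auto simp: poly_Pd)
    qed
    then obtain z where z: "\<And>k. fpoly d (A (h k)) (z k) = fpoly e (B (h k)) (W k)" by metis
    have crit: "critical_point d e (A (h k)) (B (h k)) (z k)" for k
      unfolding critical_point_def using dW[of k] z[of k] by metis
    have "\<forall>k. \<exists>x. is_path d e (A (h k)) (B (h k)) (z k) x \<and> bounded (range x)"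
      using AS crit unfolding S_set_def by blast
    then obtain X where X: "\<And>k. is_path d e (A (h k)) (B (h k)) (z k) (X k)"
      "\<And>k. bounded (range (X k))" by metis
    define u where "u k = X k 1 / of_real (Mh k)" for k
    have Geq: "fpoly e (be (h k)) (u k) = fpoly e (be (h k)) (wk k)" for k
    proof -
      let ?M = "of_real (Mh k) :: complex"
      have Mne: "?M \<noteq> 0" using Mhne[of k] by simp
      have "fpoly e (B (h k)) (X k 1) = fpoly d (A (h k)) (X k 0)"
        using X(1)[of k] unfolding is_path_def by (metis One_nat_def)
      also have "\<dots> = fpoly e (B (h k)) (W k)" using X(1)[of k] z[of k] unfolding is_path_def by simp
      finally have e1: "fpoly e (B (h k)) (X k 1) = fpoly e (B (h k)) (W k)" .
      have "fpoly e (B (h k)) (X k 1) = fpoly e (B (h k)) (?M * u k)" using Mne by (simp add: u_def)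
      also have "\<dots> = ?M ^ e * fpoly e (be (h k)) (u k)" by (simp add: scale_fpoly[OF Mhne[of k]] be_h)
      finally have e2: "fpoly e (B (h k)) (X k 1) = ?M ^ e * fpoly e (be (h k)) (u k)" .
      have e3: "fpoly e (B (h k)) (W k) = ?M ^ e * fpoly e (be (h k)) (wk k)"
        unfolding W_def by (simp add: scale_fpoly[OF Mhne[of k]] be_h)
      show ?thesis using e1 e2 e3 Mne by simp
    qed
    have evu: "eventually (\<lambda>k. cmod (u k) \<le> r \<and> cmod (fpoly d (al (h k)) (u k)) \<le> C / Mh k) sequentially"
      using ev
    proof eventually_elim
      case (elim k)
      have "cmod (X k 1 / of_real (Mh k)) \<le> 2 * real d + 1"
        by (rule scaled_path(1)[OF de _ _ _ _ X(1) X(2)])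
           (use elim caM[of "h k"] cbM[of "h k"] in \<open>auto simp: K0_def Mh_def\<close>)
      moreover have "cmod (fpoly d (nrm d (Mh k) (A (h k))) (X k 1 / of_real (Mh k))) \<le> real e * (2 * real d + 1) ^ e / Mh k"
        by (rule scaled_path(2)[OF de _ _ _ _ X(1) X(2)])
           (use elim caM[of "h k"] cbM[of "h k"] in \<open>auto simp: K0_def Mh_def\<close>)
      ultimately show ?case by (simp add: al_h C_def r_def u_def)
    qed
    define g where "g k = C / Mh k + (\<Sum>i=1..d-1. cmod (al (h k) i) * r ^ i)" for k
    have g0: "g \<longlonglongrightarrow> 0"
    proof -
      have "g \<longlonglongrightarrow> 0 + (\<Sum>i=1..d-1. cmod (as i) * r ^ i)"
        unfolding g_def by (intro tendsto_add Minf tendsto_sum tendsto_mult tendsto_norm cal tendsto_const)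
      moreover have "(\<Sum>i=1..d-1. cmod (as i) * r ^ i) = 0" using as0 by simp
      ultimately show ?thesis by simp
    qed
    have "eventually (\<lambda>k. norm (cmod (u k) ^ d) \<le> g k) sequentially"
      using evu
    proof eventually_elim
      case (elim k)
      have "cmod (u k) ^ d \<le> cmod (fpoly d (al (h k)) (u k)) + (\<Sum>i=1..d-1. cmod (al (h k) i) * r ^ i)"
        by (rule pow_bound) (use elim in auto)
      then show ?case using elim unfolding g_def by simp
    qed
    then have "(\<lambda>k. cmod (u k) ^ d) \<longlonglongrightarrow> 0" by (rule Lim_null_comparison[OF _ g0])
    then have "(\<lambda>k. root d (cmod (u k) ^ d)) \<longlonglongrightarrow> root d 0" by (rule tendsto_real_root)
    moreover have "root d (cmod (u k) ^ d) = cmod (u k)" for k using d1 by (simp add: real_root_power_cancel)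
    ultimately have "(\<lambda>k. cmod (u k)) \<longlonglongrightarrow> 0" by simp
    then have u0: "u \<longlonglongrightarrow> 0" by (simp add: tendsto_norm_zero_iff)
    have "(\<lambda>k. fpoly e (be (h k)) (u k)) \<longlonglongrightarrow> fpoly e bs 0" by (rule fpoly_tendsto[OF cbe u0])
    moreover have "(\<lambda>k. fpoly e (be (h k)) (u k)) \<longlonglongrightarrow> fpoly e bs w"
      unfolding Geq by (rule fpoly_tendsto[OF cbe wk(2)])
    ultimately have "fpoly e bs w = fpoly e bs 0" using LIMSEQ_unique by blast
    then show False using w(2) de(2) by (simp add: poly_Pd fpoly_zero)
  qed
qed


theorem theorem1p5:
  fixes d e :: nat
  assumes "d > e" and "e \<ge> 1"
  shows "compact (S_set d e)"
proof -
  obtain K where K: "\<forall>a b. (a, b) \<in> S_set d e \<longrightarrow> mu d e a b \<le> K"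
    using mu_bounded[OF assms] by blast
  have d2: "d \<ge> 2" using assms by auto
  define K' where "K' = max 1 K"
  define C where "C = K' ^ d"
  have K'1: "K' \<ge> 1" unfolding K'_def by simp
  have C0: "C \<ge> 0" unfolding C_def using K'1 by simp
  let ?B = "{x::nat \<Rightarrow> complex. \<forall>n. cmod (x n) \<le> C}"
  have sub: "S_set d e \<subseteq> ?B \<times> ?B"
  proof (clarify)
    fix a b assume ab: "(a, b) \<in> S_set d e"
    have muK: "mu d e a b \<le> K'" using K ab unfolding K'_def by force
    have mu0: "mu d e a b \<ge> 0" by (rule mu_nonneg[OF d2])
    have za: "a i = 0" if "i \<notin> {1..d-1}" for i
      using ab that unfolding S_set_def coeff_space_def by (cases "i = 0") auto
    have zb: "b j = 0" if "j \<notin> {1..e-1}" for j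
      using ab that unfolding S_set_def coeff_space_def by (cases "j = 0") auto
    have "cmod (a i) \<le> C" for i
    proof (cases "i \<in> {1..d-1}")
      case True
      have "cmod (a i) \<le> mu d e a b ^ (d - i)" by (rule mu_ge_a[OF True])
      also have "\<dots> \<le> K' ^ (d - i)" using muK mu0 by (intro power_mono) auto
      also have "\<dots> \<le> K' ^ d" using K'1 by (intro power_increasing) auto
      finally show ?thesis unfolding C_def .
    next
      case False then show ?thesis using za C0 by simp
    qed
    moreover have "cmod (b j) \<le> C" for j
    proof (cases "j \<in> {1..e-1}")
      case True
      have "cmod (b j) \<le> mu d e a b ^ (e - j)" by (rule mu_ge_b[OF True])
      also have "\<dots> \<le> K' ^ (e - j)" using muK mu0 by (intro power_mono) auto
      also have "\<dots> \<le> K' ^ d" using K'1 assms by (intro power_increasing) auto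
      finally show ?thesis unfolding C_def .
    next
      case False then show ?thesis using zb C0 by simp
    qed
    ultimately show "a \<in> ?B \<and> b \<in> ?B" by auto
  qed
  have "compact (?B \<times> ?B)" by (intro compact_Times box_compact)
  then have "compact ((?B \<times> ?B) \<inter> S_set d e)" using S_closed[OF assms] by (rule compact_Int_closed)
  moreover have "(?B \<times> ?B) \<inter> S_set d e = S_set d e" using sub by blast
  ultimately show ?thesis by simp
qed

end
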